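(* Let $N$ and $n$ be positive integers. Let $G$ be the complete graph on a vertex set $A$ and let $(A_i)_{i=1}^{n}$ be a partition of $A$ into pairwise disjoint sets with $|A_i|\ge N$ for every $i\in[n]$. Then for any $2$-colouring (red/blue) of the edges of $G$, either there is a red path $u_1u_2\cdots u_n$ with $u_i\in A_i$ for each $i\in[n]$, or for some $i\in[n-1]$ there exist $B_i\subseteq A_i$ and $B_{i+1}\subseteq A_{i+1}$ with $\min\{|B_i|,|B_{i+1}|\}\ge N/2$ such that all edges between $B_i$ and $B_{i+1}$ are blue. *)

theory Defs
  imports Complex_Main
begin
end

theory Submission
  imports Defs
begin

theorem lemmal:
  fixes N n :: nat
    and A :: "nat \<Rightarrow> 'a set"
    and red :: "'a \<Rightarrow> 'a \<Rightarrow> bool"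
  assumes "N \<ge> 1" and "n \<ge> 1"
    and "\<And>i. i \<in> {1..n} \<Longrightarrow> finite (A i)"
    and "\<And>i. i \<in> {1..n} \<Longrightarrow> card (A i) \<ge> N"
    and "\<And>i j. i \<in> {1..n} \<Longrightarrow> j \<in> {1..n} \<Longrightarrow> i \<noteq> j \<Longrightarrow> A i \<inter> A j = {}"
    and red_sym: "\<And>x y. red x y = red y x"
  shows "(\<exists>u :: nat \<Rightarrow> 'a. (\<forall>i\<in>{1..n}. u i \<in> A i) \<and> (\<forall>i\<in>{1..<n}. red (u i) (u (Suc i))))
       \<or> (\<exists>i\<in>{1..<n}. \<exists>B C. B \<subseteq> A i \<and> C \<subseteq> A (Suc i)
            \<and> real (min (card B) (card C)) \<ge> real N / 2
            \<and> (\<forall>x\<in>B. \<forall>y\<in>C. \<not> red x y))"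
proof (rule ccontr)
  assume H: "\<not> ?thesis"
  define P where "P i v \<longleftrightarrow> (\<exists>u :: nat \<Rightarrow> 'a. (\<forall>k\<in>{1..i}. u k \<in> A k) \<and>
      (\<forall>k\<in>{1..<i}. red (u k) (u (Suc k))) \<and> u i = v)" for i v
  define S where "S i = {v \<in> A i. P i v}" for i
  have ext: "P (Suc i) v" if "P i w" "red w v" "v \<in> A (Suc i)" for i w v
  proof -
    from that(1) obtain u where u: "\<forall>k\<in>{1..i}. u k \<in> A k"
      "\<forall>k\<in>{1..<i}. red (u k) (u (Suc k))" "u i = w" unfolding P_def by blast
    let ?u = "u(Suc i := v)"
    have "\<forall>k\<in>{1..Suc i}. ?u k \<in> A k" using u(1) that(3) by (auto simp: le_Suc_eq)
    moreover have "\<forall>k\<in>{1..<Suc i}. red (?u k) (?u (Suc k))"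
    proof
      fix k assume k: "k \<in> {1..<Suc i}"
      show "red (?u k) (?u (Suc k))"
      proof (cases "k = i")
        case True thus ?thesis using u(3) that(2) by simp
      next
        case False thus ?thesis using k u(2) by auto
      qed
    qed
    ultimately show ?thesis unfolding P_def by (intro exI[of _ ?u]) simp
  qed
  have main: "real (card (S i)) \<ge> real N / 2" if "i \<in> {1..n}" for i
    using that
  proof (induction i)
    case 0 thus ?case by simp
  next
    case (Suc i)
    show ?case
    proof (cases "i = 0")
      case True
      have "S 1 = A 1" unfolding S_def P_def
        by (auto intro!: exI[of _ "\<lambda>_. _"])
      moreover have "card (A 1) \<ge> N" using assms(4) assms(2) by simp
      ultimately show ?thesis using True by simp
    next
      case False
      hence i: "i \<in> {1..n}" "i \<in> {1..<n}" using Suc.prems by auto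
      have IH: "real (card (S i)) \<ge> real N / 2" using Suc.IH i by simp
      show ?thesis
      proof (rule ccontr)
        assume lt: "\<not> ?thesis"
        define C where "C = A (Suc i) - S (Suc i)"
        have fin: "finite (A (Suc i))" using assms(3) Suc.prems by blast
        have sub: "S (Suc i) \<subseteq> A (Suc i)" unfolding S_def by auto
        have cC: "card C = card (A (Suc i)) - card (S (Suc i))"
          unfolding C_def using card_Diff_subset[OF finite_subset[OF sub fin] sub] .
        have "card (S (Suc i)) \<le> card (A (Suc i))" using card_mono[OF fin sub] .
        moreover have "card (A (Suc i)) \<ge> N" using assms(4) Suc.prems by blast
        ultimately have "real (card C) \<ge> real N - real (card (S (Suc i)))"
          using cC by simp
        hence "real (card C) \<ge> real N / 2" using lt by simp
        hence m: "real (min (card (S i)) (card C)) \<ge> real N / 2" using IH by (simp add: min_def)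
        have blue: "\<forall>x\<in>S i. \<forall>y\<in>C. \<not> red x y"
          using ext unfolding C_def S_def by blast
        have "S i \<subseteq> A i" "C \<subseteq> A (Suc i)" unfolding S_def C_def by auto
        thus False using H m blue i(2) by blast
      qed
    qed
  qed
  have "real (card (S n)) \<ge> real N / 2" using main assms(2) by simp
  hence "card (S n) > 0" using assms(1) by simp
  hence "S n \<noteq> {}" by auto
  then obtain v where "P n v" unfolding S_def by blast
  then obtain u where "\<forall>k\<in>{1..n}. u k \<in> A k" "\<forall>k\<in>{1..<n}. red (u k) (u (Suc k))"
    unfolding P_def by blast
  thus False using H by blast
qed

end
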